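(* Let $\Delta_1,\Delta_2$ be simplicial complexes on $[n]$ and let $A,A',B$ be nonempty subsets of $[n]$ such that $A\cap B=A'\cap B=\emptyset$ and neither $A$ nor $A'$ meets the vertex set of $\Delta_1\cup\Delta_2$. Then $$\tilde H_i\big((A*\Delta_1)\cup(B*\Delta_2);\mathbb{K}\big)\cong\tilde H_i\big((A'*\Delta_1)\cup(B*\Delta_2);\mathbb{K}\big)\quad\text{for all } i>0.$$
   Context: A simplicial complex on $[n]$ is a finite family of subsets of $[n]$ closed under taking subsets (singletons need not belong to it); its vertex set is the union of its faces. For a nonempty $A\subseteq[n]$ and a simplicial complex $\Delta$ on $[n]$, the cone $A*\Delta$ is the simplicial complex whose facets are the sets $A\cup F$ with $F$ a facet of $\Delta$. $\tilde H_i(\,\cdot\,;\mathbb{K})$ denotes reduced simplicial homology with coefficients in the field $\mathbb{K}$. *)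

theory Defs
  imports Main
begin

definition simplicial_complex :: "nat \<Rightarrow> nat set set \<Rightarrow> bool" where
  "simplicial_complex n \<Delta> \<longleftrightarrow> \<Delta> \<subseteq> Pow {1..n} \<and> (\<forall>F\<in>\<Delta>. \<forall>G. G \<subseteq> F \<longrightarrow> G \<in> \<Delta>)"

definition vertex_set :: "nat set set \<Rightarrow> nat set" where
  "vertex_set \<Delta> = \<Union>\<Delta>"

definition facets :: "nat set set \<Rightarrow> nat set set" where
  "facets \<Delta> = {F \<in> \<Delta>. \<forall>G\<in>\<Delta>. F \<subseteq> G \<longrightarrow> G = F}"

definition cone :: "nat set \<Rightarrow> nat set set \<Rightarrow> nat set set" where
  "cone A \<Delta> = {G. \<exists>F\<in>facets \<Delta>. G \<subseteq> A \<union> F}"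

text \<open>Simplicial chains with coefficients in a field: i-chains are (finitely supported)
  functions on the faces of cardinality i+1.  Faces are oriented by the natural order
  of their vertices.  The empty face sits in degree -1 (chains with i = 0 are mapped
  to the augmentation), so this is the augmented (reduced) chain complex.\<close>
definition chains :: "nat \<Rightarrow> nat set set \<Rightarrow> (nat set \<Rightarrow> 'k::field) set" where
  "chains i X = {c. \<forall>F. c F \<noteq> 0 \<longrightarrow> F \<in> X \<and> card F = i + 1}"

definition boundary :: "nat set set \<Rightarrow> (nat set \<Rightarrow> 'k::field) \<Rightarrow> (nat set \<Rightarrow> 'k)" where
  "boundary X c G = (\<Sum>v\<in>\<Union>X - G. (-1) ^ card {u\<in>G. u < v} * c (insert v G))"

definition cycles :: "nat \<Rightarrow> nat set set \<Rightarrow> (nat set \<Rightarrow> 'k::field) set" where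
  "cycles i X = {c \<in> chains i X. \<forall>G. boundary X c G = 0}"

definition boundaries :: "nat \<Rightarrow> nat set set \<Rightarrow> (nat set \<Rightarrow> 'k::field) set" where
  "boundaries i X = boundary X ` chains (Suc i) X"

text \<open>H~_i(X;K) \<cong> H~_i(Y;K) as K-vector spaces, where H~_i = cycles / boundaries:
  there is a K-linear map f on cycles inducing a well-defined bijection of the quotients.\<close>
definition reduced_homology_iso :: "'k::field itself \<Rightarrow> nat \<Rightarrow> nat set set \<Rightarrow> nat set set \<Rightarrow> bool" where
  "reduced_homology_iso K i X Y \<longleftrightarrow>
     (\<exists>f :: (nat set \<Rightarrow> 'k) \<Rightarrow> (nat set \<Rightarrow> 'k).
        (\<forall>c\<in>cycles i X. f c \<in> cycles i Y) \<and>
        (\<forall>c\<in>cycles i X. \<forall>d\<in>cycles i X. f (\<lambda>F. c F + d F) = (\<lambda>F. f c F + f d F)) \<and>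
        (\<forall>a. \<forall>c\<in>cycles i X. f (\<lambda>F. a * c F) = (\<lambda>F. a * f c F)) \<and>
        (\<forall>c\<in>cycles i X. f c \<in> boundaries i Y \<longleftrightarrow> c \<in> boundaries i X) \<and>
        (\<forall>d\<in>cycles i Y. \<exists>c\<in>cycles i X. (\<lambda>F. d F - f c F) \<in> boundaries i Y))"

end

theory Submission
  imports Defs
begin


definition sg :: "nat set \<Rightarrow> nat \<Rightarrow> 'k::field" where
 "sg G v = (-1) ^ card {u\<in>G. u < v}"

definition bd :: "nat set \<Rightarrow> (nat set \<Rightarrow> 'k::field) \<Rightarrow> nat set \<Rightarrow> 'k" where
 "bd U c G = (\<Sum>v\<in>U - G. sg G v * c (insert v G))"

definition kap :: "nat \<Rightarrow> (nat set \<Rightarrow> 'k::field) \<Rightarrow> nat set \<Rightarrow> 'k" where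
 "kap a c G = (if a \<in> G then sg (G - {a}) a * c (G - {a}) else 0)"

definition zet :: "nat set \<Rightarrow> (nat set \<Rightarrow> 'k::field) \<Rightarrow> nat set \<Rightarrow> 'k" where
 "zet A c G = (if G \<inter> A = {} then c G else 0)"

definition Phi :: "nat set \<Rightarrow> nat \<Rightarrow> nat set \<Rightarrow> (nat set \<Rightarrow> 'k::field) \<Rightarrow> nat set \<Rightarrow> 'k" where
 "Phi U a A c = (\<lambda>G. zet A c G - kap a (bd U (zet A c)) G)"

lemma sg_sq: "sg G v * sg G v = (1::'k::field)"
  by (simp add: sg_def power_add[symmetric] mult_2[symmetric] power_mult)

lemma sg_sq2: "sg G v * (sg G v * x) = (x::'k::field)"
  by (simp add: mult.assoc[symmetric] sg_sq)

lemma sg_insert: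
  assumes "x \<notin> H"
  shows "(sg (insert x H) v :: 'k::field) = (if x < v then - sg H v else sg H v)"
proof -
  have fin: "finite {u\<in>H. u < v}" by (rule finite_subset[of _ "{..<v}"]) auto
  show ?thesis
  proof (cases "x < v")
    case True
    then have "{u\<in>insert x H. u < v} = insert x {u\<in>H. u < v}" by auto
    then show ?thesis using True fin assms by (simp add: sg_def)
  next
    case False
    then have "{u\<in>insert x H. u < v} = {u\<in>H. u < v}" by auto
    then show ?thesis using False by (simp add: sg_def)
  qed
qed

lemma bd_eq:
  assumes "c \<in> chains j X" "X \<subseteq> Pow U" "finite U"
  shows "boundary X c G = bd U c G"
proof -
  have e: "boundary X c G = (\<Sum>v\<in>\<Union>X - G. sg G v * c (insert v G))"
    by (simp add: boundary_def sg_def)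
  show ?thesis unfolding e bd_def
proof (rule sum.mono_neutral_left)
  show "finite (U - G)" using assms by simp
  show "\<Union> X - G \<subseteq> U - G" using assms by auto
  show "\<forall>i\<in>U - G - (\<Union> X - G). sg G i * c (insert i G) = 0"
    using assms(1) unfolding chains_def by auto
qed
qed

lemma bd_add: "bd U (\<lambda>G. c G + d G) = (\<lambda>G. bd U c G + bd U d G)"
  by (rule ext) (simp add: bd_def sum.distrib distrib_left)
lemma bd_diff: "bd U (\<lambda>G. c G - d G) = (\<lambda>G. bd U c G - bd U d G)"
  by (rule ext) (simp add: bd_def sum_subtractf right_diff_distrib)
lemma bd_smult: "bd U (\<lambda>G. x * c G) = (\<lambda>G. x * bd U c G)"
  by (rule ext) (simp add: bd_def sum_distrib_left mult.left_commute)
lemma kap_add: "kap a (\<lambda>G. c G + d G) = (\<lambda>G. kap a c G + kap a d G)"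
  by (rule ext) (simp add: kap_def distrib_left)
lemma kap_smult: "kap a (\<lambda>G. x * c G) = (\<lambda>G. x * kap a c G)"
  by (rule ext) (simp add: kap_def mult.left_commute)
lemma zet_add: "zet A (\<lambda>G. c G + d G) = (\<lambda>G. zet A c G + zet A d G)"
  by (rule ext) (simp add: zet_def)
lemma zet_smult: "zet A (\<lambda>G. x * c G) = (\<lambda>G. x * zet A c G)"
  by (rule ext) (simp add: zet_def)
lemma Phi_add: "Phi U a A (\<lambda>G. c G + d G) = (\<lambda>G. Phi U a A c G + Phi U a A d G)"
  by (rule ext) (simp add: Phi_def zet_add bd_add kap_add)
lemma Phi_smult: "Phi U a A (\<lambda>G. x * c G) = (\<lambda>G. x * Phi U a A c G)"
  by (rule ext) (simp add: Phi_def zet_smult bd_smult kap_smult right_diff_distrib)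
lemma boundary_add: "boundary X (\<lambda>G. c G + d G) = (\<lambda>G. boundary X c G + boundary X d G)"
  by (rule ext) (simp add: boundary_def sum.distrib distrib_left)

lemma bd_supp: "bd U c G \<noteq> 0 \<Longrightarrow> \<exists>v\<in>U - G. c (insert v G) \<noteq> 0"
  unfolding bd_def by (metis (mono_tags, lifting) mult_zero_right sum.neutral)

lemma kap_zero: "(\<And>G. c G = 0) \<Longrightarrow> kap a c G = 0"
  by (simp add: kap_def)

lemma cone_id:
  assumes "finite U" "a \<in> U"
  shows "bd U (kap a c) G + kap a (bd U c) G = (c G :: 'k::field)"
proof (cases "a \<in> G")
  case False
  have "bd U (kap a c) G = sg G a * kap a c (insert a G) + (\<Sum>v\<in>U - G - {a}. sg G v * kap a c (insert v G))"
    unfolding bd_def by (rule sum.remove) (use assms False in auto)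
  also have "(\<Sum>v\<in>U - G - {a}. sg G v * kap a c (insert v G)) = 0"
    using False by (intro sum.neutral) (auto simp: kap_def)
  also have "sg G a * kap a c (insert a G) = c G"
  proof -
    have "insert a G - {a} = G" using False by auto
    then have "kap a c (insert a G) = sg G a * c G" by (simp add: kap_def)
    then show ?thesis by (simp add: sg_sq2)
  qed
  moreover have "kap a (bd U c) G = 0" using False by (simp add: kap_def)
  ultimately show ?thesis by simp
next
  case True
  define H where "H = G - {a}"
  have aH: "a \<notin> H" and GH: "G = insert a H" using True by (auto simp: H_def)
  have "kap a (bd U c) G = sg H a * bd U c H" using True by (simp add: kap_def H_def)
  also have "bd U c H = sg H a * c G + (\<Sum>v\<in>U - G. sg H v * c (insert v H))"
  proof -
    have "U - H = insert a (U - G)" using assms GH aH by auto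
    moreover have "insert a H = G" using GH by simp
    moreover have "finite (U - G)" using assms by simp
    moreover have "a \<notin> U - G" using True by simp
    ultimately show ?thesis unfolding bd_def by simp
  qed
  finally have k: "kap a (bd U c) G = c G + (\<Sum>v\<in>U - G. sg H a * sg H v * c (insert v H))"
    by (simp add: distrib_left mult.assoc sg_sq2 sum_distrib_left)
  have b: "bd U (kap a c) G = (\<Sum>v\<in>U - G. sg G v * sg (insert v H) a * c (insert v H))"
    unfolding bd_def
  proof (rule sum.cong)
    fix v assume v: "v \<in> U - G"
    then have "insert v G - {a} = insert v H" "a \<in> insert v G" using GH aH True by auto
    then show "sg G v * kap a c (insert v G) = sg G v * sg (insert v H) a * c (insert v H)"
      by (simp add: kap_def)
  qed simp
  have "bd U (kap a c) G + (\<Sum>v\<in>U - G. sg H a * sg H v * c (insert v H)) = 0"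
    unfolding b sum.distrib[symmetric]
  proof (rule sum.neutral, rule ballI)
    fix v assume v: "v \<in> U - G"
    then have vH: "v \<notin> H" "v \<noteq> a" using GH by auto
    have "(sg G v :: 'k) * sg (insert v H) a = - (sg H a * sg H v)"
      unfolding GH using vH aH by (auto simp: sg_insert)
    then show "sg G v * sg (insert v H) a * c (insert v H) + sg H a * sg H v * c (insert v H) = 0"
      by (simp add: algebra_simps)
  qed
  then show ?thesis using k by (simp add: algebra_simps)
qed

lemma bdbd:
  assumes "finite U"
  shows "bd U (bd U c) G = (0::'k::field)"
proof -
  define t where "t = (\<lambda>v w. (sg G v :: 'k) * sg (insert v G) w * c (insert w (insert v G)))"
  define P where "P = Sigma (U - G) (\<lambda>v. U - G - {v})"
  have finP: "finite P" unfolding P_def using assms by auto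
  have "bd U (bd U c) G = (\<Sum>v\<in>U - G. \<Sum>w\<in>U - G - {v}. t v w)"
    unfolding bd_def t_def
    by (intro sum.cong refl) (auto simp: sum_distrib_left mult.assoc intro!: sum.cong)
  also have "\<dots> = (\<Sum>(v,w)\<in>P. t v w)"
    unfolding P_def by (rule sum.Sigma) (auto simp: assms)
  also have "\<dots> = (\<Sum>p\<in>P. t (fst p) (snd p))"
    by (simp add: split_def)
  also have "P = {p\<in>P. fst p < snd p} \<union> {p\<in>P. snd p < fst p}"
    unfolding P_def by auto
  also have "(\<Sum>p\<in>\<dots>. t (fst p) (snd p)) = (\<Sum>p\<in>{p\<in>P. fst p < snd p}. t (fst p) (snd p))
      + (\<Sum>p\<in>{p\<in>P. snd p < fst p}. t (fst p) (snd p))"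
    using finP by (intro sum.union_disjoint) auto
  also have "(\<Sum>p\<in>{p\<in>P. snd p < fst p}. t (fst p) (snd p)) = (\<Sum>p\<in>{p\<in>P. fst p < snd p}. t (snd p) (fst p))"
  proof -
    have "{p\<in>P. snd p < fst p} = prod.swap ` {p\<in>P. fst p < snd p}"
      unfolding P_def by (auto simp: image_iff)
    moreover have "inj_on prod.swap {p\<in>P. fst p < snd p}" by (simp add: inj_on_def)
    ultimately show ?thesis by (simp add: sum.reindex)
  qed
  also have "(\<Sum>p\<in>{p\<in>P. fst p < snd p}. t (snd p) (fst p)) = (\<Sum>p\<in>{p\<in>P. fst p < snd p}. - t (fst p) (snd p))"
  proof (rule sum.cong)
    fix p assume p: "p \<in> {p\<in>P. fst p < snd p}"
    obtain v w where pv: "p = (v, w)" by (cases p)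
    have vw: "v \<notin> G" "w \<notin> G" "v < w" using p pv unfolding P_def by auto
    have ic: "insert v (insert w G) = insert w (insert v G)" by auto
    have "t w v = - t v w" unfolding t_def ic using vw
      by (auto simp: sg_insert)
    then show "t (snd p) (fst p) = - t (fst p) (snd p)" using pv by simp
  qed simp
  finally show ?thesis by (simp add: sum_negf)
qed




lemma cone_char:
  assumes "simplicial_complex n D"
  shows "cone A D = {G. G - A \<in> D}"
proof
  show "cone A D \<subseteq> {G. G - A \<in> D}"
  proof
    fix G assume "G \<in> cone A D"
    then obtain F where F: "F \<in> facets D" "G \<subseteq> A \<union> F" unfolding cone_def by auto
    then have "F \<in> D" "G - A \<subseteq> F" unfolding facets_def by auto
    then show "G \<in> {G. G - A \<in> D}" using assms unfolding simplicial_complex_def by auto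
  qed
next
  show "{G. G - A \<in> D} \<subseteq> cone A D"
  proof
    fix G assume "G \<in> {G. G - A \<in> D}"
    then have G: "G - A \<in> D" by simp
    have "D \<subseteq> Pow {1..n}" using assms unfolding simplicial_complex_def by auto
    then have "finite D" by (rule finite_subset) simp
    then obtain m where m: "m \<in> D" "G - A \<subseteq> m" "\<forall>b\<in>D. m \<subseteq> b \<longrightarrow> m = b"
      using finite_has_maximal2[OF _ G] by blast
    then have "m \<in> facets D" unfolding facets_def by auto
    moreover have "G \<subseteq> A \<union> m" using m by auto
    ultimately show "G \<in> cone A D" unfolding cone_def by auto
  qed
qed

locale cc =
  fixes n :: nat and D1 D2 :: "nat set set" and B :: "nat set"
  assumes sc1: "simplicial_complex n D1" and sc2: "simplicial_complex n D2"
    and Bsub: "B \<subseteq> {1..n}"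
begin

definition good where
  "good A \<longleftrightarrow> A \<subseteq> {1..n} \<and> A \<inter> B = {} \<and> A \<inter> vertex_set (D1 \<union> D2) = {}"

definition Z where "Z G \<longleftrightarrow> G \<in> D1 \<or> G - B \<in> D2"

definition XA where "XA A = cone A D1 \<union> cone B D2"

lemma XA_char: "XA A = {G. G - A \<in> D1 \<or> G - B \<in> D2}"
  unfolding XA_def cone_char[OF sc1] cone_char[OF sc2] by auto

lemma D1_sub: "H \<in> D1 \<Longrightarrow> H \<subseteq> {1..n}" using sc1 unfolding simplicial_complex_def by auto
lemma D2_sub: "H \<in> D2 \<Longrightarrow> H \<subseteq> {1..n}" using sc2 unfolding simplicial_complex_def by auto
lemma D1_down: "H \<in> D1 \<Longrightarrow> K \<subseteq> H \<Longrightarrow> K \<in> D1" using sc1 unfolding simplicial_complex_def by auto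
lemma D2_down: "H \<in> D2 \<Longrightarrow> K \<subseteq> H \<Longrightarrow> K \<in> D2" using sc2 unfolding simplicial_complex_def by auto

lemma XA_sub: "good A \<Longrightarrow> XA A \<subseteq> Pow {1..n}"
proof
  fix G assume A: "good A" and G: "G \<in> XA A"
  show "G \<in> Pow {1..n}"
  proof (cases "G - A \<in> D1")
    case True
    then have "G - A \<subseteq> {1..n}" by (rule D1_sub)
    then show ?thesis using A unfolding good_def by auto
  next
    case False
    then have "G - B \<in> D2" using G unfolding XA_char by auto
    then have "G - B \<subseteq> {1..n}" by (rule D2_sub)
    then show ?thesis using Bsub by auto
  qed
qed

lemma XA_fin: "good A \<Longrightarrow> G \<in> XA A \<Longrightarrow> finite G"
  using XA_sub by (meson PowD finite_atLeastAtMost finite_subset subsetD)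

lemma D1_disj: "good A \<Longrightarrow> G \<in> D1 \<Longrightarrow> G \<inter> A = {}"
  unfolding good_def vertex_set_def by auto

lemma D2_disj: "good A \<Longrightarrow> G \<in> D2 \<Longrightarrow> G \<inter> A = {}"
  unfolding good_def vertex_set_def by auto

lemma Z_disj: "good A \<Longrightarrow> Z G \<Longrightarrow> G \<inter> A = {}"
proof -
  assume A: "good A" and "Z G"
  then consider "G \<in> D1" | "G - B \<in> D2" unfolding Z_def by auto
  then show ?thesis
  proof cases
    case 1 then show ?thesis using D1_disj[OF A] by auto
  next
    case 2
    then have "(G - B) \<inter> A = {}" using D2_disj[OF A] by auto
    then show ?thesis using A unfolding good_def by auto
  qed
qed

lemma Z_XA: "good A \<Longrightarrow> Z G \<Longrightarrow> G \<in> XA A"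
  using Z_disj[of A G] unfolding XA_char Z_def by (auto simp: Diff_triv)

lemma XA_Z: "G \<in> XA A \<Longrightarrow> G \<inter> A = {} \<Longrightarrow> Z G"
  unfolding XA_char Z_def by (auto simp: Diff_triv)

lemma XA_meet: "good A \<Longrightarrow> G \<in> XA A \<Longrightarrow> G \<inter> A \<noteq> {} \<Longrightarrow> G - A \<in> D1"
  using Z_disj[of A G] unfolding XA_char Z_def by auto

lemma XA_intro: "G - A \<in> D1 \<Longrightarrow> G \<in> XA A"
  unfolding XA_char by auto

lemma Z_mono: "Z G \<Longrightarrow> H \<subseteq> G \<Longrightarrow> Z H"
proof -
  assume "Z G" "H \<subseteq> G"
  moreover have "H - B \<subseteq> G - B" using \<open>H \<subseteq> G\<close> by auto
  ultimately show "Z H" unfolding Z_def using D1_down D2_down by metis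
qed

lemma chainsD: "c \<in> chains j X \<Longrightarrow> c F \<noteq> 0 \<Longrightarrow> F \<in> X \<and> card F = j + 1"
  unfolding chains_def by auto

lemma card_ins: "finite (insert v G) \<Longrightarrow> v \<notin> G \<Longrightarrow> card (insert v G) = card G + 1"
  by simp

lemma split_a:
  assumes "good A" "c \<in> chains j (XA A)" "bd {1..n} (zet A c) G \<noteq> 0"
  shows "G \<inter> A = {} \<and> Z G \<and> card G = j"
proof -
  obtain v where v: "v \<in> {1..n} - G" "zet A c (insert v G) \<noteq> 0" using bd_supp[OF assms(3)] by blast
  then have d: "insert v G \<inter> A = {}" "c (insert v G) \<noteq> 0" by (auto simp: zet_def split: if_splits)
  then have x: "insert v G \<in> XA A" "card (insert v G) = j + 1" using chainsD[OF assms(2)] by auto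
  have "Z (insert v G)" using XA_Z x d by blast
  then have "Z G" using Z_mono by blast
  moreover have "finite (insert v G)" using XA_fin[OF assms(1) x(1)] .
  ultimately show ?thesis using d x v by auto
qed

lemma split_b:
  assumes "good A" "c \<in> chains j (XA A)"
    "zet A (bd {1..n} (\<lambda>G. c G - zet A c G)) G \<noteq> 0"
  shows "G \<in> D1 \<and> card G = j"
proof -
  have GA: "G \<inter> A = {}" and nz: "bd {1..n} (\<lambda>G. c G - zet A c G) G \<noteq> 0"
    using assms(3) by (auto simp: zet_def split: if_splits)
  obtain v where v: "v \<in> {1..n} - G" "c (insert v G) - zet A c (insert v G) \<noteq> 0"
    using bd_supp[OF nz] by blast
  then have d: "insert v G \<inter> A \<noteq> {}" "c (insert v G) \<noteq> 0" by (auto simp: zet_def split: if_splits)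
  then have x: "insert v G \<in> XA A" "card (insert v G) = j + 1" using chainsD[OF assms(2)] by auto
  have "insert v G - A \<in> D1" using XA_meet[OF assms(1) x(1) d(1)] .
  moreover have "insert v G - A = G" using GA d(1) by auto
  moreover have "finite (insert v G)" using XA_fin[OF assms(1) x(1)] .
  ultimately show ?thesis using x v by auto
qed

lemma split_c:
  assumes "good A" "c \<in> chains j (XA A)"
  shows "zet A (bd {1..n} c) G = bd {1..n} (zet A c) G + zet A (bd {1..n} (\<lambda>G. c G - zet A c G)) G"
proof -
  have "c = (\<lambda>G. zet A c G + (c G - zet A c G))" by simp
  then have "bd {1..n} c G = bd {1..n} (zet A c) G + bd {1..n} (\<lambda>G. c G - zet A c G) G"
    by (metis (no_types) bd_add)
  moreover have "G \<inter> A \<noteq> {} \<Longrightarrow> bd {1..n} (zet A c) G = 0" using split_a[OF assms] by blast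
  ultimately show ?thesis by (auto simp: zet_def)
qed

lemma cyc_bd:
  assumes "good A" "c \<in> cycles i (XA A)"
  shows "\<And>G. bd {1..n} c G = 0" "c \<in> chains i (XA A)"
  using assms bd_eq[of c i "XA A" "{1..n}"] XA_sub[OF assms(1)] unfolding cycles_def by auto

lemma Cyc:
  assumes A: "good A" and A2: "good A2" "a2 \<in> A2" and c: "c \<in> cycles i (XA A)"
  shows "Phi {1..n} a2 A c \<in> cycles i (XA A2)"
proof -
  have ch: "c \<in> chains i (XA A)" and bc: "\<And>G. bd {1..n} c G = 0" using cyc_bd[OF A c] by auto
  define z where "z = zet A c"
  have bz: "bd {1..n} z G \<noteq> 0 \<Longrightarrow> G \<in> D1 \<and> card G = i" for G
  proof -
    assume "bd {1..n} z G \<noteq> 0"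
    moreover have "zet A (bd {1..n} c) G = 0" using bc by (simp add: zet_def)
    ultimately have "zet A (bd {1..n} (\<lambda>G. c G - zet A c G)) G \<noteq> 0"
      using split_c[OF A ch, of G] unfolding z_def by (metis add.right_neutral)
    then show ?thesis using split_b[OF A ch] by blast
  qed
  have a2n: "a2 \<in> {1..n}" using A2 unfolding good_def by auto
  have chn: "Phi {1..n} a2 A c \<in> chains i (XA A2)"
    unfolding chains_def mem_Collect_eq
  proof (intro allI impI)
    fix G assume "Phi {1..n} a2 A c G \<noteq> 0"
    then have "z G \<noteq> 0 \<or> kap a2 (bd {1..n} z) G \<noteq> 0" unfolding Phi_def z_def by auto
    then show "G \<in> XA A2 \<and> card G = i + 1"
    proof
      assume "z G \<noteq> 0"
      then have "G \<inter> A = {}" "c G \<noteq> 0" unfolding z_def zet_def by (auto split: if_splits)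
      moreover from this have "G \<in> XA A" "card G = i + 1" using chainsD[OF ch] by auto
      ultimately show ?thesis using XA_Z Z_XA[OF A2(1)] by simp
    next
      assume k: "kap a2 (bd {1..n} z) G \<noteq> 0"
      then have aG: "a2 \<in> G" and "bd {1..n} z (G - {a2}) \<noteq> 0" unfolding kap_def by (auto split: if_splits)
      then have H: "G - {a2} \<in> D1" "card (G - {a2}) = i" using bz by auto
      have "G - A2 = (G - {a2}) - A2" using A2 by auto
      also have "\<dots> = G - {a2}" using D1_disj[OF A2(1) H(1)] by auto
      finally have "G \<in> XA A2" using H XA_intro by auto
      moreover have "finite G" using XA_fin[OF A2(1) calculation] .
      ultimately show ?thesis using H aG card_gt_0_iff[of G] by (auto simp: card_Diff_singleton_if)
    qed
  qed
  have "boundary (XA A2) (Phi {1..n} a2 A c) G = 0" for G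
  proof -
    have "boundary (XA A2) (Phi {1..n} a2 A c) G = bd {1..n} (Phi {1..n} a2 A c) G"
      using bd_eq[OF chn XA_sub[OF A2(1)]] by simp
    also have "\<dots> = bd {1..n} z G - bd {1..n} (kap a2 (bd {1..n} z)) G"
      unfolding Phi_def z_def[symmetric] bd_diff by simp
    also have "\<dots> = kap a2 (bd {1..n} (bd {1..n} z)) G"
      using cone_id[of "{1..n}" a2 "bd {1..n} z" G] a2n by (simp add: algebra_simps)
    also have "\<dots> = 0" by (rule kap_zero) (simp add: bdbd)
    finally show ?thesis .
  qed
  then show ?thesis using chn unfolding cycles_def by auto
qed

lemma Hom:
  assumes A: "good A" "a \<in> A" and c: "c \<in> cycles i (XA A)"
  shows "(\<lambda>G. c G - Phi {1..n} a A c G) \<in> boundaries i (XA A)"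
proof -
  define p where "p = Phi {1..n} a A c"
  define w where "w = (\<lambda>G. c G - p G)"
  have p: "p \<in> cycles i (XA A)" unfolding p_def by (rule Cyc[OF A(1) A c])
  have ch: "c \<in> chains i (XA A)" and bc: "\<And>G. bd {1..n} c G = 0" using cyc_bd[OF A(1) c] by auto
  have chp: "p \<in> chains i (XA A)" and bp: "\<And>G. bd {1..n} p G = 0" using cyc_bd[OF A(1) p] by auto
  have an: "a \<in> {1..n}" using A unfolding good_def by auto
  have wch: "w \<in> chains i (XA A)" unfolding chains_def mem_Collect_eq
  proof (intro allI impI)
    fix F assume "w F \<noteq> 0"
    then have "c F \<noteq> 0 \<or> p F \<noteq> 0" unfolding w_def by auto
    then show "F \<in> XA A \<and> card F = i + 1" using chainsD[OF ch] chainsD[OF chp] by auto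
  qed
  have bw: "bd {1..n} w G = 0" for G unfolding w_def bd_diff using bc bp by simp
  have wA: "w G \<noteq> 0 \<Longrightarrow> G \<inter> A \<noteq> {}" for G
  proof
    assume "w G \<noteq> 0" "G \<inter> A = {}"
    then have "a \<notin> G" using A by auto
    then show False using \<open>w G \<noteq> 0\<close> \<open>G \<inter> A = {}\<close>
      unfolding w_def p_def Phi_def zet_def kap_def by simp
  qed
  define k where "k = kap a w"
  have kch: "k \<in> chains (Suc i) (XA A)" unfolding chains_def mem_Collect_eq
  proof (intro allI impI)
    fix G assume "k G \<noteq> 0"
    then have aG: "a \<in> G" and wn: "w (G - {a}) \<noteq> 0" unfolding k_def kap_def by (auto split: if_splits)
    then have H: "G - {a} \<in> XA A" "card (G - {a}) = i + 1" using chainsD[OF wch] by auto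
    have "G - {a} - A \<in> D1" using XA_meet[OF A(1) H(1) wA[OF wn]] .
    moreover have "G - {a} - A = G - A" using A by auto
    ultimately have "G \<in> XA A" using XA_intro by auto
    moreover have "finite G" using XA_fin[OF A(1) calculation] .
    ultimately show "G \<in> XA A \<and> card G = Suc i + 1" using H aG card_gt_0_iff[of G] by (auto simp: card_Diff_singleton_if)
  qed
  have "boundary (XA A) k G = w G" for G
  proof -
    have "boundary (XA A) k G = bd {1..n} k G" using bd_eq[OF kch XA_sub[OF A(1)]] by simp
    also have "\<dots> = w G - kap a (bd {1..n} w) G"
      using cone_id[of "{1..n}" a w G] an unfolding k_def by (simp add: algebra_simps)
    also have "kap a (bd {1..n} w) G = 0" by (rule kap_zero, rule bw)
    finally show ?thesis by simp
  qed
  then have "w = boundary (XA A) k" by auto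
  then show ?thesis using kch unfolding boundaries_def w_def p_def by auto
qed

lemma L:
  assumes A: "good A" and A2: "good A2" "a2 \<in> A2" and c: "c \<in> boundaries i (XA A)"
  shows "Phi {1..n} a2 A c \<in> boundaries i (XA A2)"
proof -
  obtain e where e: "e \<in> chains (Suc i) (XA A)" and ce: "c = boundary (XA A) e"
    using c unfolding boundaries_def by auto
  have ce2: "c = bd {1..n} e" using ce bd_eq[OF e XA_sub[OF A]] by auto
  have a2n: "a2 \<in> {1..n}" using A2 unfolding good_def by auto
  define y where "y = zet A e"
  define u where "u = zet A (bd {1..n} (\<lambda>G. e G - zet A e G))"
  have u: "u G \<noteq> 0 \<Longrightarrow> G \<in> D1 \<and> card G = Suc i" for G
    using split_b[OF A e] unfolding u_def by auto
  have zc: "zet A c = (\<lambda>G. bd {1..n} y G + u G)"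
    using split_c[OF A e] unfolding ce2 y_def u_def by auto
  have bzc: "bd {1..n} (zet A c) = bd {1..n} u"
    unfolding zc bd_add by (rule ext) (simp add: bdbd)
  have P1: "Phi {1..n} a2 A c G = bd {1..n} y G + (u G - kap a2 (bd {1..n} u) G)" for G
    unfolding Phi_def bzc by (simp add: zc)
  have P2: "u G - kap a2 (bd {1..n} u) G = bd {1..n} (kap a2 u) G" for G
    using cone_id[of "{1..n}" a2 u G] a2n by (simp add: algebra_simps)
  have P: "Phi {1..n} a2 A c = bd {1..n} (\<lambda>G. y G + kap a2 u G)"
    unfolding bd_add using P1 P2 by auto
  have ech: "(\<lambda>G. y G + kap a2 u G) \<in> chains (Suc i) (XA A2)"
    unfolding chains_def mem_Collect_eq
  proof (intro allI impI)
    fix G assume "y G + kap a2 u G \<noteq> 0"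
    then have "y G \<noteq> 0 \<or> kap a2 u G \<noteq> 0" by auto
    then show "G \<in> XA A2 \<and> card G = Suc i + 1"
    proof
      assume "y G \<noteq> 0"
      then have "G \<inter> A = {}" "e G \<noteq> 0" unfolding y_def zet_def by (auto split: if_splits)
      moreover from this have "G \<in> XA A" "card G = Suc i + 1" using chainsD[OF e] by auto
      ultimately show ?thesis using XA_Z Z_XA[OF A2(1)] by simp
    next
      assume k: "kap a2 u G \<noteq> 0"
      then have aG: "a2 \<in> G" and "u (G - {a2}) \<noteq> 0" unfolding kap_def by (auto split: if_splits)
      then have H: "G - {a2} \<in> D1" "card (G - {a2}) = Suc i" using u by auto
      have "G - A2 = (G - {a2}) - A2" using A2 by auto
      also have "\<dots> = G - {a2}" using D1_disj[OF A2(1) H(1)] by auto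
      finally have "G \<in> XA A2" using H XA_intro by auto
      moreover have "finite G" using XA_fin[OF A2(1) calculation] .
      ultimately show ?thesis using H aG card_gt_0_iff[of G] by (auto simp: card_Diff_singleton_if)
    qed
  qed
  have "Phi {1..n} a2 A c = boundary (XA A2) (\<lambda>G. y G + kap a2 u G)"
    unfolding P using bd_eq[OF ech XA_sub[OF A2(1)]] by auto
  then show ?thesis using ech unfolding boundaries_def by auto
qed

lemma PhiPhi:
  assumes A: "good A" and A2: "good A2" "a2 \<in> A2" and c: "c \<in> chains i (XA A)"
  shows "Phi {1..n} a A2 (Phi {1..n} a2 A c) = Phi {1..n} a A c"
proof -
  have "zet A2 (Phi {1..n} a2 A c) = zet A c"
  proof
    fix G show "zet A2 (Phi {1..n} a2 A c) G = zet A c G"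
    proof (cases "G \<inter> A2 = {}")
      case True
      then have "a2 \<notin> G" using A2 by auto
      then show ?thesis using True by (simp add: zet_def Phi_def kap_def)
    next
      case False
      have "zet A c G = 0"
      proof (rule ccontr)
        assume "zet A c G \<noteq> 0"
        then have "G \<inter> A = {}" "c G \<noteq> 0" unfolding zet_def by (auto split: if_splits)
        moreover from this have "G \<in> XA A" using chainsD[OF c] by auto
        ultimately have "Z G" using XA_Z by simp
        then show False using Z_disj[OF A2(1)] False by blast
      qed
      then show ?thesis using False by (simp add: zet_def)
    qed
  qed
  then show ?thesis unfolding Phi_def[of _ _ A2] by (simp add: Phi_def)
qed

lemma bdries_add:
  assumes "x \<in> boundaries i X" "y \<in> boundaries i X"
  shows "(\<lambda>G. x G + y G) \<in> boundaries i X"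
proof -
  obtain e1 e2 where e: "e1 \<in> chains (Suc i) X" "e2 \<in> chains (Suc i) X"
    "x = boundary X e1" "y = boundary X e2"
    using assms unfolding boundaries_def by auto
  have "(\<lambda>G. e1 G + e2 G) \<in> chains (Suc i) X" unfolding chains_def mem_Collect_eq
  proof (intro allI impI)
    fix F assume "e1 F + e2 F \<noteq> 0"
    then have "e1 F \<noteq> 0 \<or> e2 F \<noteq> 0" by auto
    then show "F \<in> X \<and> card F = Suc i + 1" using chainsD[OF e(1)] chainsD[OF e(2)] by auto
  qed
  moreover have "(\<lambda>G. x G + y G) = boundary X (\<lambda>G. e1 G + e2 G)"
    unfolding boundary_add e by simp
  ultimately show ?thesis unfolding boundaries_def by auto
qed

end

theorem corollary3p3:
  fixes n i :: nat and \<Delta>1 \<Delta>2 :: "nat set set" and A A' B :: "nat set"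
  assumes "simplicial_complex n \<Delta>1" and "simplicial_complex n \<Delta>2"
    and "A \<noteq> {}" and "A \<subseteq> {1..n}" and "A' \<noteq> {}" and "A' \<subseteq> {1..n}"
    and "B \<noteq> {}" and "B \<subseteq> {1..n}"
    and "A \<inter> B = {}" and "A' \<inter> B = {}"
    and "A \<inter> vertex_set (\<Delta>1 \<union> \<Delta>2) = {}" and "A' \<inter> vertex_set (\<Delta>1 \<union> \<Delta>2) = {}"
    and "i > 0"
  shows "reduced_homology_iso TYPE('k::field) i
           (cone A \<Delta>1 \<union> cone B \<Delta>2) (cone A' \<Delta>1 \<union> cone B \<Delta>2)"
proof -
  interpret cc n \<Delta>1 \<Delta>2 B using assms by unfold_locales
  have gA: "good A" and gA': "good A'" using assms by (simp_all add: good_def)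
  obtain a where a: "a \<in> A" using assms(3) by blast
  obtain a' where a': "a' \<in> A'" using assms(5) by blast
  have X: "cone A \<Delta>1 \<union> cone B \<Delta>2 = XA A" "cone A' \<Delta>1 \<union> cone B \<Delta>2 = XA A'"
    by (simp_all add: XA_def)
  define f :: "(nat set \<Rightarrow> 'k) \<Rightarrow> (nat set \<Rightarrow> 'k)" where "f = Phi {1..n} a' A"
  have c1: "\<forall>c\<in>cycles i (XA A). f c \<in> cycles i (XA A')"
    unfolding f_def using Cyc[OF gA gA' a'] by blast
  have c2: "\<forall>c\<in>cycles i (XA A). \<forall>d\<in>cycles i (XA A). f (\<lambda>F. c F + d F) = (\<lambda>F. f c F + f d F)"
    unfolding f_def by (simp add: Phi_add)
  have c3: "\<forall>x. \<forall>c\<in>cycles i (XA A). f (\<lambda>F. x * c F) = (\<lambda>F. x * f c F)"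
    unfolding f_def by (simp add: Phi_smult)
  have c4: "\<forall>c\<in>cycles i (XA A). f c \<in> boundaries i (XA A') \<longleftrightarrow> c \<in> boundaries i (XA A)"
  proof (intro ballI iffI)
    fix c :: "nat set \<Rightarrow> 'k" assume c: "c \<in> cycles i (XA A)"
    {
      assume "c \<in> boundaries i (XA A)"
      then show "f c \<in> boundaries i (XA A')" unfolding f_def by (rule L[OF gA gA' a'])
    }
    assume fc: "f c \<in> boundaries i (XA A')"
    have ch: "c \<in> chains i (XA A)" using c unfolding cycles_def by auto
    have "Phi {1..n} a A' (f c) \<in> boundaries i (XA A)" by (rule L[OF gA' gA a fc])
    moreover have "Phi {1..n} a A' (f c) = Phi {1..n} a A c"
      unfolding f_def by (rule PhiPhi[OF gA gA' a' ch])
    ultimately have p: "Phi {1..n} a A c \<in> boundaries i (XA A)" by simp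
    have "(\<lambda>G. (c G - Phi {1..n} a A c G) + Phi {1..n} a A c G) \<in> boundaries i (XA A)"
      by (rule bdries_add[OF Hom[OF gA a c] p])
    then show "c \<in> boundaries i (XA A)" by simp
  qed
  have c5: "\<forall>d\<in>cycles i (XA A'). \<exists>c\<in>cycles i (XA A). (\<lambda>F. d F - f c F) \<in> boundaries i (XA A')"
  proof
    fix d :: "nat set \<Rightarrow> 'k" assume d: "d \<in> cycles i (XA A')"
    have ch: "d \<in> chains i (XA A')" using d unfolding cycles_def by auto
    have "Phi {1..n} a A' d \<in> cycles i (XA A)" by (rule Cyc[OF gA' gA a d])
    moreover have "f (Phi {1..n} a A' d) = Phi {1..n} a' A' d"
      unfolding f_def by (rule PhiPhi[OF gA' gA a ch])
    ultimately show "\<exists>c\<in>cycles i (XA A). (\<lambda>F. d F - f c F) \<in> boundaries i (XA A')"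
      using Hom[OF gA' a' d] by (intro bexI[of _ "Phi {1..n} a A' d"]) simp_all
  qed
  show ?thesis unfolding reduced_homology_iso_def X
    by (rule exI[of _ f], intro conjI c1 c2 c3 c4 c5)
qed

end
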